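(* Let $N=\{1,\ldots,n\}$ and $v\in\mathscr{G}_+(n)$. Then $v$ is a vertex of $\mathscr{BG}_+(n)$ if and only if $v$ is balanced and $0$-$1$-valued (i.e., $v(S)\in\{0,1\}$ for all $S\subseteq N$).
   Context: A game on $N$ is a map $v:2^N\to\mathbb{R}$ with $v(\varnothing)=0$. $\mathscr{G}_+(n)$ is the set of games with $v\geqslant 0$ and $v(N)=1$. The core of $v$ is $C(v)=\{x\in\mathbb{R}^N: \sum_{i\in S}x_i\geqslant v(S)\ \forall S\subseteq N,\ \sum_{i\in N}x_i=v(N)\}$; $v$ is balanced iff $C(v)\neq\varnothing$ (equivalently, $\sum_{S\in\mathscr{B}}\lambda^{\mathscr{B}}_Sv(S)\leqslant v(N)$ for every minimal balanced collection $\mathscr{B}\neq\{N\}$ with its balancing weights $\lambda^{\mathscr{B}}_S$). $\mathscr{BG}_+(n)$ is the set of balanced games in $\mathscr{G}_+(n)$, a polytope in $\mathbb{R}^{2^N\setminus\{\varnothing,N\}}$. *)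

theory Defs
  imports "HOL-Analysis.Analysis"
begin

text \<open>Players: a finite type 'n (N = UNIV, n = CARD('n)). A game (indexed by all
coalitions S of N) is a vector in real^('n set); the coordinates at the empty set and N
are fixed by the constraints, so this is an affine copy of the paper's space
R^(2^N minus the empty set and N).\<close>

definition is_game :: "real^('n::finite set) \<Rightarrow> bool" where
  "is_game v \<longleftrightarrow> v $ {} = 0"

definition G_plus :: "(real^('n::finite set)) set" where
  "G_plus = {v. is_game v \<and> (\<forall>S. v $ S \<ge> 0) \<and> v $ UNIV = 1}"

definition core :: "real^('n::finite set) \<Rightarrow> (real^'n) set" where
  "core v = {x. (\<forall>S. (\<Sum>i\<in>S. x $ i) \<ge> v $ S) \<and> (\<Sum>i\<in>UNIV. x $ i) = v $ UNIV}"

definition balanced_game :: "real^('n::finite set) \<Rightarrow> bool" where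
  "balanced_game v \<longleftrightarrow> core v \<noteq> {}"

definition BG_plus :: "(real^('n::finite set)) set" where
  "BG_plus = {v \<in> G_plus. balanced_game v}"

end

theory Submission
  imports Defs
begin

lemma BG_le1:
  fixes w :: "real^('n::finite set)"
  assumes "w \<in> BG_plus"
  shows "w $ S \<le> 1"
proof -
  from assms obtain x where x: "x \<in> core w" and g: "w \<in> G_plus"
    unfolding BG_plus_def balanced_game_def by auto
  have c1: "(\<Sum>i\<in>S. x $ i) \<ge> w $ S" and c2: "(\<Sum>i\<in>UNIV - S. x $ i) \<ge> w $ (UNIV - S)"
    and tot: "(\<Sum>i\<in>UNIV. x $ i) = w $ UNIV"
    using x unfolding core_def by auto
  have "w $ (UNIV - S) \<ge> 0" "w $ UNIV = 1" using g unfolding G_plus_def by auto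
  moreover have "(\<Sum>i\<in>UNIV. x $ i) = (\<Sum>i\<in>UNIV - S. x $ i) + (\<Sum>i\<in>S. x $ i)"
    by (rule sum.subset_diff) auto
  ultimately show ?thesis using c1 c2 tot by linarith
qed

lemma convex_BG: "convex (BG_plus :: (real^('n::finite set)) set)"
  unfolding convex_def
proof (intro ballI allI impI)
  fix a b :: "real^('n set)" and u t :: real
  assume a: "a \<in> BG_plus" and b: "b \<in> BG_plus" and u: "0 \<le> u" and t: "0 \<le> t" and ut: "u + t = 1"
  from a obtain x where x: "x \<in> core a" and ga: "a \<in> G_plus"
    unfolding BG_plus_def balanced_game_def by auto
  from b obtain y where y: "y \<in> core b" and gb: "b \<in> G_plus"
    unfolding BG_plus_def balanced_game_def by auto
  have "u *\<^sub>R x + t *\<^sub>R y \<in> core (u *\<^sub>R a + t *\<^sub>R b)"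
  proof -
    have "\<forall>S. (\<Sum>i\<in>S. (u *\<^sub>R x + t *\<^sub>R y) $ i) \<ge> (u *\<^sub>R a + t *\<^sub>R b) $ S"
    proof
      fix S
      have "(\<Sum>i\<in>S. (u *\<^sub>R x + t *\<^sub>R y) $ i) = u * (\<Sum>i\<in>S. x $ i) + t * (\<Sum>i\<in>S. y $ i)"
        by (simp add: sum.distrib sum_distrib_left)
      moreover have "(\<Sum>i\<in>S. x $ i) \<ge> a $ S" "(\<Sum>i\<in>S. y $ i) \<ge> b $ S"
        using x y unfolding core_def by auto
      ultimately show "(\<Sum>i\<in>S. (u *\<^sub>R x + t *\<^sub>R y) $ i) \<ge> (u *\<^sub>R a + t *\<^sub>R b) $ S"
        using u t by (simp add: add_mono mult_left_mono)
    qed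
    moreover have "(\<Sum>i\<in>UNIV. (u *\<^sub>R x + t *\<^sub>R y) $ i) = (u *\<^sub>R a + t *\<^sub>R b) $ UNIV"
    proof -
      have "(\<Sum>i\<in>UNIV. (u *\<^sub>R x + t *\<^sub>R y) $ i) = u * (\<Sum>i\<in>UNIV. x $ i) + t * (\<Sum>i\<in>UNIV. y $ i)"
        by (simp add: sum.distrib sum_distrib_left)
      then show ?thesis using x y unfolding core_def by auto
    qed
    ultimately show ?thesis unfolding core_def by auto
  qed
  moreover have "u *\<^sub>R a + t *\<^sub>R b \<in> G_plus"
    using ga gb u t ut unfolding G_plus_def is_game_def by auto
  ultimately show "u *\<^sub>R a + t *\<^sub>R b \<in> BG_plus"
    unfolding BG_plus_def balanced_game_def by auto
qed

lemma veto_in_BG: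
  fixes w :: "real^('n::finite set)"
  assumes "w $ {} = 0" "w $ UNIV = 1" "\<And>S. 0 \<le> w $ S"
    "\<And>S. w $ S \<le> (if i \<in> S then 1 else 0)"
  shows "w \<in> BG_plus"
proof -
  let ?e = "\<chi> j. if j = i then 1 else (0::real)"
  have s: "(\<Sum>j\<in>S. ?e $ j) = (if i \<in> S then 1 else 0)" for S
    by (simp add: sum.delta)
  have "?e \<in> core w" unfolding core_def using s assms(2,4) by auto
  then show ?thesis using assms unfolding BG_plus_def G_plus_def is_game_def balanced_game_def
    by auto
qed

theorem theorem8:
  fixes v :: "real^('n::finite set)"
  assumes "v \<in> G_plus"
  shows "v extreme_point_of BG_plus \<longleftrightarrow> balanced_game v \<and> (\<forall>S. v $ S \<in> {0, 1})"
proof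
  assume ext: "v extreme_point_of BG_plus"
  then have vB: "v \<in> BG_plus" unfolding extreme_point_of_def by auto
  then have bal: "balanced_game v" unfolding BG_plus_def by auto
  from vB obtain x where x: "x \<in> core v" unfolding BG_plus_def balanced_game_def by auto
  have v0: "v $ {} = 0" and vpos: "\<And>S. 0 \<le> v $ S" and vN: "v $ UNIV = 1"
    using assms unfolding G_plus_def is_game_def by auto
  have xS: "\<And>S. v $ S \<le> (\<Sum>i\<in>S. x $ i)" and xN: "(\<Sum>i\<in>UNIV. x $ i) = 1"
    using x vN unfolding core_def by auto
  have xpos: "x $ j \<ge> 0" for j using xS[of "{j}"] vpos[of "{j}"] by simp
  define w where "w = (\<lambda>i. \<chi> S. if i \<in> S \<and> (\<Sum>j\<in>S. x $ j) \<noteq> 0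
      then v $ S / (\<Sum>j\<in>S. x $ j) else (0::real))"
  have wB: "w i \<in> BG_plus" for i
  proof (rule veto_in_BG[where i = i])
    show "w i $ {} = 0" unfolding w_def by simp
    show "w i $ UNIV = 1" unfolding w_def using xN vN by simp
    show "0 \<le> w i $ S" for S unfolding w_def using vpos[of S] xS[of S] vpos[of S] by auto
    show "w i $ S \<le> (if i \<in> S then 1 else 0)" for S
    proof (cases "i \<in> S \<and> (\<Sum>j\<in>S. x $ j) \<noteq> 0")
      case True
      then have "(\<Sum>j\<in>S. x $ j) > 0" using xS[of S] vpos[of S] by linarith
      then show ?thesis using True xS[of S] unfolding w_def by simp
    next
      case False
      then show ?thesis unfolding w_def by auto
    qed
  qed
  have vsum: "v = (\<Sum>i\<in>UNIV. x $ i *\<^sub>R w i)"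
  proof (subst vec_eq_iff, rule allI)
    fix S
    show "v $ S = (\<Sum>i\<in>UNIV. x $ i *\<^sub>R w i) $ S"
    proof (cases "(\<Sum>j\<in>S. x $ j) = 0")
      case True
      then have "v $ S = 0" using xS[of S] vpos[of S] by linarith
      then show ?thesis using True unfolding w_def by simp
    next
      case False
      have "(\<Sum>i\<in>UNIV. x $ i *\<^sub>R w i) $ S
          = (\<Sum>i\<in>UNIV. x $ i * (if i \<in> S then v $ S / (\<Sum>j\<in>S. x $ j) else 0))"
        using False unfolding w_def by simp
      also have "\<dots> = (\<Sum>i\<in>S. x $ i) * (v $ S / (\<Sum>j\<in>S. x $ j))"
      proof -
        define c where "c = v $ S / (\<Sum>j\<in>S. x $ j)"
        have "(\<Sum>i\<in>UNIV. x $ i * (if i \<in> S then c else 0)) = (\<Sum>i\<in>UNIV. if i \<in> S then x $ i * c else 0)"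
          by (rule sum.cong) auto
        also have "\<dots> = (\<Sum>i\<in>S. x $ i * c)"
          using sum.inter_restrict[of UNIV "\<lambda>i. x $ i * c" S] by (simp only: finite Int_UNIV_left)
        also have "\<dots> = (\<Sum>i\<in>S. x $ i) * c" by (rule sum_distrib_right[symmetric])
        finally show ?thesis unfolding c_def .
      qed
      also have "\<dots> = v $ S" using False by simp
      finally show ?thesis by simp
    qed
  qed
  have vH: "v \<in> convex hull (range w)"
    unfolding vsum
    by (rule convex_sum) (auto simp: xN xpos intro: hull_inc)
  have Hsub: "convex hull (range w) \<subseteq> BG_plus"
    by (rule hull_minimal) (auto simp: wB convex_BG)
  have "v extreme_point_of (convex hull (range w))"
    using ext vH Hsub unfolding extreme_point_of_def by blast
  then have "v \<in> range w" by (rule extreme_point_of_convex_hull)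
  then obtain i where vi: "v = w i" by (rule rangeE)
  have veto: "v $ S = 0" if "i \<notin> S" for S
  proof -
    have "w i $ S = 0" using that unfolding w_def by simp
    then show ?thesis using vi by simp
  qed
  have le1: "v $ S \<le> 1" for S using BG_le1[OF vB] .
  have "v $ S \<in> {0, 1}" for S
  proof (rule ccontr)
    assume "v $ S \<notin> {0, 1}"
    then have p: "0 < v $ S" "v $ S < 1" using vpos[of S] le1[of S] by auto
    then have iS: "i \<in> S" using veto by force
    have SN: "S \<noteq> {}" "S \<noteq> UNIV" using p v0 vN by auto
    define a where "a = (\<chi> T. if T = S then 0 else v $ T)"
    define b where "b = (\<chi> T. if T = S then 1 else v $ T)"
    have vt: "v $ T \<le> (if i \<in> T then 1 else 0)" for T using veto[of T] le1[of T] by auto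
    have aB: "a \<in> BG_plus"
    proof (rule veto_in_BG[where i = i])
      show "a $ {} = 0" "a $ UNIV = 1" using SN v0 vN by (auto simp: a_def)
      show "0 \<le> a $ T" for T using vpos[of T] by (auto simp: a_def)
      show "a $ T \<le> (if i \<in> T then 1 else 0)" for T
      proof (cases "T = S")
        case True then show ?thesis by (simp add: a_def)
      next
        case False then have "a $ T = v $ T" by (simp add: a_def)
        then show ?thesis using vt[of T] by simp
      qed
    qed
    have bB: "b \<in> BG_plus"
    proof (rule veto_in_BG[where i = i])
      show "b $ {} = 0" "b $ UNIV = 1" using SN v0 vN by (auto simp: b_def)
      show "0 \<le> b $ T" for T using vpos[of T] by (auto simp: b_def)
      show "b $ T \<le> (if i \<in> T then 1 else 0)" for T
      proof (cases "T = S")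
        case True then show ?thesis using iS by (simp add: b_def)
      next
        case False then have "b $ T = v $ T" by (simp add: b_def)
        then show ?thesis using vt[of T] by simp
      qed
    qed
    have "v \<in> open_segment a b"
      unfolding in_segment
    proof (intro conjI exI)
      show "a \<noteq> b" unfolding a_def b_def by (auto simp: vec_eq_iff)
      show "0 < v $ S" "v $ S < 1" using p by auto
      show "v = (1 - v $ S) *\<^sub>R a + v $ S *\<^sub>R b"
        unfolding a_def b_def by (auto simp: vec_eq_iff algebra_simps)
    qed
    then show False using ext aB bB unfolding extreme_point_of_def by blast
  qed
  then show "balanced_game v \<and> (\<forall>S. v $ S \<in> {0, 1})" using bal by auto
next
  assume h: "balanced_game v \<and> (\<forall>S. v $ S \<in> {0, 1})"
  then have vB: "v \<in> BG_plus" using assms unfolding BG_plus_def by auto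
  have "v \<notin> open_segment a b" if aB: "a \<in> BG_plus" and bB: "b \<in> BG_plus" for a b
  proof
    assume "v \<in> open_segment a b"
    then obtain u where ab: "a \<noteq> b" and u: "0 < u" "u < 1" and vu: "v = (1 - u) *\<^sub>R a + u *\<^sub>R b"
      unfolding in_segment by auto
    have "a $ S = b $ S" for S
    proof -
      have e: "v $ S = (1 - u) * a $ S + u * b $ S" using vu by simp
      have ap: "0 \<le> a $ S" "a $ S \<le> 1" using aB BG_le1[OF aB] unfolding BG_plus_def G_plus_def by auto
      have bp: "0 \<le> b $ S" "b $ S \<le> 1" using bB BG_le1[OF bB] unfolding BG_plus_def G_plus_def by auto
      have m1: "0 \<le> (1 - u) * a $ S" "0 \<le> u * b $ S" using ap bp u by auto
      have m2: "0 \<le> (1 - u) * (1 - a $ S)" "0 \<le> u * (1 - b $ S)" using ap bp u by auto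
      show ?thesis
      proof (cases "v $ S = 0")
        case True
        then have "(1 - u) * a $ S = 0" "u * b $ S = 0" using e m1 by linarith+
        then show ?thesis using u by simp
      next
        case False
        then have "v $ S = 1" using h by auto
        moreover have "(1 - u) * (1 - a $ S) + u * (1 - b $ S) = 1 - ((1 - u) * a $ S + u * b $ S)"
          by (simp add: algebra_simps)
        ultimately have z: "(1 - u) * (1 - a $ S) = 0" "u * (1 - b $ S) = 0" using e m2
          by linarith+
        have "1 - u \<noteq> 0" "u \<noteq> 0" using u by auto
        then have "1 - a $ S = 0" "1 - b $ S = 0" using z by simp_all
        then show ?thesis by simp
      qed
    qed
    then show False using ab by (simp add: vec_eq_iff)
  qed
  then show "v extreme_point_of BG_plus" using vB unfolding extreme_point_of_def by blast
qed

end
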